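(* Let $a<b$, $1<p<\infty$, $q=p/(p-1)$, $\Delta=\{(t,\tau):a\le\tau<t\le b\}$, $k\in L^q(\Delta;\mathbb{R})$, $\lambda,\mu\in\mathbb{R}$, and let $K_P,K_{P^*},A_{P^*},B_P$ be as in the context. Let $F:\mathbb{R}^4\times[a,b]\to\mathbb{R}$ be of class $C^1$, $y_a,y_b\in\mathbb{R}$, $\mathcal{A}(y_a,y_b)=\{y\in C^1([a,b];\mathbb{R}): y(a)=y_a,\ y(b)=y_b,\ K_P[y],B_P[y]\in C([a,b];\mathbb{R})\}$, and, with $(\star_y)(t)=(y(t),K_P[y](t),\dot y(t),B_P[y](t),t)$, assume that for every $y\in\mathcal{A}(y_a,y_b)$: $K_{P^*}[\tau\mapsto\partial_2F(\star_y)(\tau)]\in C([a,b];\mathbb{R})$, $t\mapsto\partial_3F(\star_y)(t)\in C^1([a,b];\mathbb{R})$, $K_{P^*}[\tau\mapsto\partial_4F(\star_y)(\tau)]\in C^1([a,b];\mathbb{R})$. Let $\mathcal{I}(y)=\int_a^bF(\star_y)(t)\,dt$. Suppose $\bar y\in\mathcal{A}(y_a,y_b)$ satisfies, for all $t\in(a,b)$, $$\frac{d}{dt}\big[\partial_3F(\star_{\bar y})(t)\big]+A_{P^*}\big[\tau\mapsto\partial_4F(\star_{\bar y})(\tau)\big](t)=\partial_1F(\star_{\bar y})(t)+K_{P^*}\big[\tau\mapsto\partial_2F(\star_{\bar y})(\tau)\big](t),$$ and that $(x_1,x_2,x_3,x_4)\mapsto F(x_1,x_2,x_3,x_4,t)$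 is convex for every $t\in[a,b]$. Then $\bar y$ is a minimizer of $\mathcal{I}$ on $\mathcal{A}(y_a,y_b)$.
   Context: $K_P[f](t)=\lambda\int_a^t k(t,\tau)f(\tau)d\tau+\mu\int_t^b k(\tau,t)f(\tau)d\tau$; $K_{P^*}[f](t)=\mu\int_a^t k(t,\tau)f(\tau)d\tau+\lambda\int_t^b k(\tau,t)f(\tau)d\tau$; $A_{P^*}=\frac{d}{dt}\circ K_{P^*}$; $B_P=K_P\circ\frac{d}{dt}$. $\partial_iF$ is the partial derivative of $F$ with respect to its $i$-th argument. A minimizer of $\mathcal{I}$ on $\mathcal{A}$ is $\bar y\in\mathcal{A}$ with $\mathcal{I}(\bar y)\le\mathcal{I}(y)$ for all $y\in\mathcal{A}$ in some norm-neighborhood of $\bar y$. *)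

theory Defs
  imports "HOL-Analysis.Analysis"
begin

definition Delta :: "real \<Rightarrow> real \<Rightarrow> (real \<times> real) set" where
  "Delta a b = {(t, \<tau>). a \<le> \<tau> \<and> \<tau> < t \<and> t \<le> b}"

definition in_Lq :: "real \<Rightarrow> (real \<times> real) set \<Rightarrow> (real \<times> real \<Rightarrow> real) \<Rightarrow> bool" where
  "in_Lq q D k \<longleftrightarrow> set_borel_measurable lborel D k \<and>
     set_integrable lborel D (\<lambda>x. \<bar>k x\<bar> powr q)"

definition KP :: "real \<Rightarrow> real \<Rightarrow> real \<Rightarrow> real \<Rightarrow> (real \<times> real \<Rightarrow> real)
                  \<Rightarrow> (real \<Rightarrow> real) \<Rightarrow> real \<Rightarrow> real" where
  "KP a b lam mu k f t =
     lam * (LINT \<tau>:{a..t}|lborel. k (t, \<tau>) * f \<tau>) + mu * (LINT \<tau>:{t..b}|lborel. k (\<tau>, t) * f \<tau>)"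

definition KPs :: "real \<Rightarrow> real \<Rightarrow> real \<Rightarrow> real \<Rightarrow> (real \<times> real \<Rightarrow> real)
                  \<Rightarrow> (real \<Rightarrow> real) \<Rightarrow> real \<Rightarrow> real" where
  "KPs a b lam mu k f t = KP a b mu lam k f t"

definition dotd :: "real \<Rightarrow> real \<Rightarrow> (real \<Rightarrow> real) \<Rightarrow> real \<Rightarrow> real" where
  "dotd a b y t = vector_derivative y (at t within {a..b})"

definition APs :: "real \<Rightarrow> real \<Rightarrow> real \<Rightarrow> real \<Rightarrow> (real \<times> real \<Rightarrow> real)
                  \<Rightarrow> (real \<Rightarrow> real) \<Rightarrow> real \<Rightarrow> real" where
  "APs a b lam mu k f t = dotd a b (KPs a b lam mu k f) t"

definition BP :: "real \<Rightarrow> real \<Rightarrow> real \<Rightarrow> real \<Rightarrow> (real \<times> real \<Rightarrow> real)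
                  \<Rightarrow> (real \<Rightarrow> real) \<Rightarrow> real \<Rightarrow> real" where
  "BP a b lam mu k y t = KP a b lam mu k (dotd a b y) t"

definition C1_interval :: "real \<Rightarrow> real \<Rightarrow> (real \<Rightarrow> real) \<Rightarrow> bool" where
  "C1_interval a b f \<longleftrightarrow> (\<exists>f'. continuous_on {a..b} f' \<and>
      (\<forall>t\<in>{a..b}. (f has_real_derivative f' t) (at t within {a..b})))"

definition C1_on :: "'a::real_normed_vector set \<Rightarrow> ('a \<Rightarrow> real) \<Rightarrow> bool" where
  "C1_on S F \<longleftrightarrow> (\<exists>F'. (\<forall>z\<in>S. (F has_derivative F' z) (at z within S)) \<and>
      (\<forall>v. continuous_on S (\<lambda>z. F' z v)))"

type_synonym arg5 = "real \<times> real \<times> real \<times> real \<times> real"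

definition d1 :: "(arg5 \<Rightarrow> real) \<Rightarrow> arg5 \<Rightarrow> real" where
  "d1 F z = (case z of (x1,x2,x3,x4,t) \<Rightarrow> deriv (\<lambda>s. F (s,x2,x3,x4,t)) x1)"
definition d2 :: "(arg5 \<Rightarrow> real) \<Rightarrow> arg5 \<Rightarrow> real" where
  "d2 F z = (case z of (x1,x2,x3,x4,t) \<Rightarrow> deriv (\<lambda>s. F (x1,s,x3,x4,t)) x2)"
definition d3 :: "(arg5 \<Rightarrow> real) \<Rightarrow> arg5 \<Rightarrow> real" where
  "d3 F z = (case z of (x1,x2,x3,x4,t) \<Rightarrow> deriv (\<lambda>s. F (x1,x2,s,x4,t)) x3)"
definition d4 :: "(arg5 \<Rightarrow> real) \<Rightarrow> arg5 \<Rightarrow> real" where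
  "d4 F z = (case z of (x1,x2,x3,x4,t) \<Rightarrow> deriv (\<lambda>s. F (x1,x2,x3,s,t)) x4)"

definition adm :: "real \<Rightarrow> real \<Rightarrow> real \<Rightarrow> real \<Rightarrow> (real \<times> real \<Rightarrow> real)
                   \<Rightarrow> real \<Rightarrow> real \<Rightarrow> (real \<Rightarrow> real) set" where
  "adm a b lam mu k ya yb = {y. C1_interval a b y \<and> y a = ya \<and> y b = yb \<and>
      continuous_on {a..b} (KP a b lam mu k y) \<and> continuous_on {a..b} (BP a b lam mu k y)}"

definition star :: "real \<Rightarrow> real \<Rightarrow> real \<Rightarrow> real \<Rightarrow> (real \<times> real \<Rightarrow> real)
                   \<Rightarrow> (real \<Rightarrow> real) \<Rightarrow> real \<Rightarrow> arg5" where
  "star a b lam mu k y t = (y t, KP a b lam mu k y t, dotd a b y t, BP a b lam mu k y t, t)"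

definition Ifun :: "real \<Rightarrow> real \<Rightarrow> real \<Rightarrow> real \<Rightarrow> (real \<times> real \<Rightarrow> real)
                   \<Rightarrow> (arg5 \<Rightarrow> real) \<Rightarrow> (real \<Rightarrow> real) \<Rightarrow> real" where
  "Ifun a b lam mu k F y = (LINT t:{a..b}|lborel. F (star a b lam mu k y t))"

definition local_minimizer :: "real \<Rightarrow> real \<Rightarrow> ((real \<Rightarrow> real) \<Rightarrow> real)
                               \<Rightarrow> (real \<Rightarrow> real) set \<Rightarrow> (real \<Rightarrow> real) \<Rightarrow> bool" where
  "local_minimizer a b I A ybar \<longleftrightarrow> ybar \<in> A \<and>
     (\<exists>\<epsilon>>0. \<forall>y\<in>A. (\<forall>t\<in>{a..b}. \<bar>y t - ybar t\<bar> < \<epsilon>) \<longrightarrow> I ybar \<le> I y)"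

end

theory Submission
  imports Defs
begin


lemma Delta_sets: "Delta a b \<in> sets lborel"
proof -
  have e: "Delta a b = {x::real\<times>real. a \<le> snd x} \<inter> {x. snd x < fst x} \<inter> {x. fst x \<le> b}"
    by (auto simp: Delta_def)
  have "closed {x::real\<times>real. a \<le> snd x}"
    by (intro closed_Collect_le continuous_intros)
  moreover have "closed {x::real\<times>real. fst x \<le> b}"
    by (intro closed_Collect_le continuous_intros)
  moreover have "open {x::real\<times>real. snd x < fst x}"
    by (intro open_Collect_less continuous_intros)
  ultimately show ?thesis unfolding e sets_lborel
    by (intro sets.Int borel_closed borel_open)
qed

lemma Delta_fin: "emeasure lborel (Delta a b) < \<infinity>"
proof -
  have "Delta a b \<subseteq> cbox (a,a) (b,b)" by (auto simp: Delta_def cbox_Pair_eq)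
  hence "emeasure lborel (Delta a b) \<le> emeasure lborel (cbox (a,a) (b,b))"
    by (intro emeasure_mono) auto
  thus ?thesis using emeasure_lborel_cbox_finite[of "(a,a)" "(b,b)"] by (simp add: order_le_less_trans)
qed

lemma k_L1:
  assumes q: "1 < q" and k: "in_Lq q (Delta a b) k"
  shows "set_integrable lborel (Delta a b) k"
proof -
  have m: "(\<lambda>x. indicator (Delta a b) x *\<^sub>R k x) \<in> borel_measurable lborel"
    using k by (simp add: in_Lq_def set_borel_measurable_def)
  have i1: "integrable lborel (\<lambda>x. indicator (Delta a b) x *\<^sub>R (\<bar>k x\<bar> powr q))"
    using k by (simp add: in_Lq_def set_integrable_def)
  have i2: "integrable lborel (indicator (Delta a b) :: real\<times>real \<Rightarrow> real)"
    using Delta_sets Delta_fin by (intro integrable_real_indicator) auto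
  have ii: "integrable lborel (\<lambda>x. indicator (Delta a b) x *\<^sub>R (\<bar>k x\<bar> powr q) + indicator (Delta a b) x)"
    using i1 i2 by (rule Bochner_Integration.integrable_add)
  have bnd: "norm (indicator (Delta a b) x *\<^sub>R k x) \<le>
     norm (indicator (Delta a b) x *\<^sub>R (\<bar>k x\<bar> powr q) + (indicator (Delta a b) x :: real))" for x
  proof -
    have "\<bar>k x\<bar> \<le> \<bar>k x\<bar> powr q + 1"
    proof (cases "\<bar>k x\<bar> \<le> 1")
      case True thus ?thesis using powr_ge_zero[of "\<bar>k x\<bar>" q] by linarith
    next
      case False
      hence "\<bar>k x\<bar> powr 1 \<le> \<bar>k x\<bar> powr q" using q by (intro powr_mono) auto
      thus ?thesis using False by simp
    qed
    thus ?thesis by (auto split: split_indicator)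
  qed
  show ?thesis unfolding set_integrable_def
    by (rule Bochner_Integration.integrable_bound[OF ii m AE_I2[OF bnd]])
qed

lemma cont_bound:
  fixes g :: "real \<Rightarrow> real"
  assumes "continuous_on {a..b} g"
  obtains M where "\<And>t. \<bar>indicator {a..b} t * g t\<bar> \<le> M"
proof -
  have "bounded (g ` {a..b})" by (intro compact_imp_bounded compact_continuous_image assms compact_Icc)
  then obtain M where M: "\<And>t. t \<in> {a..b} \<Longrightarrow> \<bar>g t\<bar> \<le> M" unfolding bounded_real by blast
  have "\<bar>indicator {a..b} t * g t\<bar> \<le> max M 0" for t
    using M[of t] by (auto split: split_indicator)
  thus ?thesis using that by blast
qed

lemma adj_half:
  fixes f g :: "real \<Rightarrow> real" and k :: "real \<times> real \<Rightarrow> real"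
  assumes kint: "set_integrable lborel (Delta a b) k"
    and f: "continuous_on {a..b} f" and g: "continuous_on {a..b} g"
  shows "set_integrable lborel {a..b} (\<lambda>t. g t * (LINT \<tau>:{a..t}|lborel. k (t,\<tau>) * f \<tau>))"
    and "set_integrable lborel {a..b} (\<lambda>\<tau>. f \<tau> * (LINT t:{\<tau>..b}|lborel. k (t,\<tau>) * g t))"
    and "(LINT t:{a..b}|lborel. g t * (LINT \<tau>:{a..t}|lborel. k (t,\<tau>) * f \<tau>))
         = (LINT \<tau>:{a..b}|lborel. f \<tau> * (LINT t:{\<tau>..b}|lborel. k (t,\<tau>) * g t))"
proof -
  define g' where "g' t = indicator {a..b} t * g t" for t :: real
  define f' where "f' t = indicator {a..b} t * f t" for t :: real
  have g'm: "g' \<in> borel_measurable borel"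
    using borel_measurable_continuous_on_indicator[OF _ g] unfolding g'_def by simp
  have f'm: "f' \<in> borel_measurable borel"
    using borel_measurable_continuous_on_indicator[OF _ f] unfolding f'_def by simp
  obtain Mg where Mg: "\<And>t. \<bar>g' t\<bar> \<le> Mg" using cont_bound[OF g] unfolding g'_def by blast
  obtain Mf where Mf: "\<And>t. \<bar>f' t\<bar> \<le> Mf" using cont_bound[OF f] unfolding f'_def by blast
  define K where "K x = indicator (Delta a b) x * k x" for x
  have Ki: "integrable lborel K" using kint unfolding set_integrable_def K_def[abs_def] by simp
  define H where "H x = K x * (g' (fst x) * f' (snd x))" for x
  have Hm: "H \<in> borel_measurable lborel"
  proof -
    have "K \<in> borel_measurable lborel" using Ki by (rule borel_measurable_integrable)
    moreover have "(\<lambda>x::real\<times>real. g' (fst x) * f' (snd x)) \<in> borel_measurable lborel"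
    proof -
      have "(\<lambda>x::real\<times>real. g' (fst x) * f' (snd x)) \<in> borel_measurable (borel \<Otimes>\<^sub>M borel)"
        using g'm f'm by measurable
      thus ?thesis by (simp add: borel_prod)
    qed
    ultimately show ?thesis unfolding H_def[abs_def] by (rule borel_measurable_times)
  qed
  have Hi: "integrable lborel H"
  proof (rule Bochner_Integration.integrable_bound[OF _ Hm])
    show "integrable lborel (\<lambda>x. (Mg * Mf) * K x)" using Ki by simp
    show "AE x in lborel. norm (H x) \<le> norm ((Mg * Mf) * K x)"
    proof (rule AE_I2)
      fix x :: "real \<times> real"
      have "\<bar>g' (fst x) * f' (snd x)\<bar> \<le> Mg * Mf"
        using Mg Mf by (simp add: abs_mult mult_mono')
      moreover have "\<bar>H x\<bar> = \<bar>K x\<bar> * \<bar>g' (fst x) * f' (snd x)\<bar>" by (simp add: H_def abs_mult)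
      moreover have "\<bar>Mg*Mf\<bar> = Mg * Mf" using Mg[of 0] Mf[of 0] by simp
      ultimately show "norm (H x) \<le> norm ((Mg * Mf) * K x)"
        by (simp add: abs_mult mult.commute mult_left_mono)
    qed
  qed
  have PS: "pair_sigma_finite lborel lborel"
    by (simp add: pair_sigma_finite_def lborel.sigma_finite_measure_axioms)
  have Hi2: "integrable (lborel \<Otimes>\<^sub>M lborel) (case_prod (\<lambda>t \<tau>. H (t,\<tau>)))"
    using Hi by (simp add: lborel_prod)
  have eq1: "indicator {a..b} t * (g t * (LINT \<tau>:{a..t}|lborel. k (t,\<tau>) * f \<tau>)) = (\<integral>\<tau>. H (t,\<tau>) \<partial>lborel)" for t
  proof (cases "t \<in> {a..b}")
    case True
    have "(\<integral>\<tau>. H (t,\<tau>) \<partial>lborel) = (\<integral>\<tau>. g t * (indicator {a..<t} \<tau> * (k (t,\<tau>) * f \<tau>)) \<partial>lborel)"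
      using True by (intro Bochner_Integration.integral_cong) (auto simp: H_def K_def g'_def f'_def Delta_def split: split_indicator)
    also have "\<dots> = g t * (LINT \<tau>:{a..<t}|lborel. k (t,\<tau>) * f \<tau>)"
      by (simp add: set_lebesgue_integral_def)
    also have "(LINT \<tau>:{a..<t}|lborel. k (t,\<tau>) * f \<tau>) = (LINT \<tau>:{a..t}|lborel. k (t,\<tau>) * f \<tau>)"
      by (rule set_integral_discrete_difference[where X="{t}"]) auto
    finally show ?thesis using True by simp
  next
    case False
    thus ?thesis by (simp add: H_def K_def Delta_def split: split_indicator)
  qed
  have eq2: "indicator {a..b} \<tau> * (f \<tau> * (LINT t:{\<tau>..b}|lborel. k (t,\<tau>) * g t)) = (\<integral>t. H (t,\<tau>) \<partial>lborel)" for \<tau>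
  proof (cases "\<tau> \<in> {a..b}")
    case True
    have "(\<integral>t. H (t,\<tau>) \<partial>lborel) = (\<integral>t. f \<tau> * (indicator {\<tau><..b} t * (k (t,\<tau>) * g t)) \<partial>lborel)"
      using True by (intro Bochner_Integration.integral_cong) (auto simp: H_def K_def g'_def f'_def Delta_def split: split_indicator)
    also have "\<dots> = f \<tau> * (LINT t:{\<tau><..b}|lborel. k (t,\<tau>) * g t)"
      by (simp add: set_lebesgue_integral_def)
    also have "(LINT t:{\<tau><..b}|lborel. k (t,\<tau>) * g t) = (LINT t:{\<tau>..b}|lborel. k (t,\<tau>) * g t)"
      by (rule set_integral_discrete_difference[where X="{\<tau>}"]) auto
    finally show ?thesis using True by simp
  next
    case False
    hence "H (t,\<tau>) = 0" for t by (auto simp: H_def K_def Delta_def split: split_indicator)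
    thus ?thesis using False by simp
  qed
  show "set_integrable lborel {a..b} (\<lambda>t. g t * (LINT \<tau>:{a..t}|lborel. k (t,\<tau>) * f \<tau>))"
    unfolding set_integrable_def using pair_sigma_finite.integrable_fst[OF PS Hi2] eq1 by simp
  show "set_integrable lborel {a..b} (\<lambda>\<tau>. f \<tau> * (LINT t:{\<tau>..b}|lborel. k (t,\<tau>) * g t))"
    unfolding set_integrable_def using pair_sigma_finite.integrable_snd[OF PS Hi2] eq2 by simp
  show "(LINT t:{a..b}|lborel. g t * (LINT \<tau>:{a..t}|lborel. k (t,\<tau>) * f \<tau>))
         = (LINT \<tau>:{a..b}|lborel. f \<tau> * (LINT t:{\<tau>..b}|lborel. k (t,\<tau>) * g t))"
  proof -
    have "(LINT t:{a..b}|lborel. g t * (LINT \<tau>:{a..t}|lborel. k (t,\<tau>) * f \<tau>)) = (\<integral>t. (\<integral>\<tau>. H (t,\<tau>) \<partial>lborel) \<partial>lborel)"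
      by (simp only: set_lebesgue_integral_def[of lborel "{a..b}"] real_scaleR_def eq1)
    moreover have "(LINT \<tau>:{a..b}|lborel. f \<tau> * (LINT t:{\<tau>..b}|lborel. k (t,\<tau>) * g t)) = (\<integral>\<tau>. (\<integral>t. H (t,\<tau>) \<partial>lborel) \<partial>lborel)"
      by (simp only: set_lebesgue_integral_def[of lborel "{a..b}"] real_scaleR_def eq2)
    ultimately show ?thesis using pair_sigma_finite.Fubini_integral[OF PS Hi2] by simp
  qed
qed



abbreviation SS :: "real \<Rightarrow> real \<Rightarrow> arg5 set" where
  "SS a b \<equiv> UNIV \<times> UNIV \<times> UNIV \<times> UNIV \<times> {a..b}"

lemma line_deriv:
  fixes F :: "arg5 \<Rightarrow> real"
  assumes Fd: "\<And>z. z \<in> SS a b \<Longrightarrow> (F has_derivative F' z) (at z within SS a b)"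
    and inS: "\<And>s. x + s *\<^sub>R v \<in> SS a b"
  shows "((\<lambda>s. F (x + s *\<^sub>R v)) has_real_derivative F' (x + s0 *\<^sub>R v) v) (at s0)"
proof -
  have i: "((\<lambda>s::real. x + s *\<^sub>R v) has_derivative (\<lambda>h. h *\<^sub>R v)) (at s0 within UNIV)"
    by (auto intro!: derivative_eq_intros)
  have "((\<lambda>s. F (x + s *\<^sub>R v)) has_derivative (\<lambda>h. F' (x + s0 *\<^sub>R v) (h *\<^sub>R v))) (at s0 within UNIV)"
    by (rule has_derivative_in_compose2[OF Fd _ _ i]) (use inS in blast)+
  moreover have "linear (F' (x + s0 *\<^sub>R v))"
    using Fd[OF inS[of s0]] by (rule has_derivative_linear)
  hence "(\<lambda>h. F' (x + s0 *\<^sub>R v) (h *\<^sub>R v)) = (\<lambda>h. F' (x + s0 *\<^sub>R v) v * h)"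
    by (auto simp: linear_scale mult.commute)
  moreover have "(\<lambda>h. F' (x + s0 *\<^sub>R v) v * h) = (*) (F' (x + s0 *\<^sub>R v) v)" by auto
  ultimately show ?thesis unfolding has_field_derivative_def by simp
qed

lemma partials:
  fixes F :: "arg5 \<Rightarrow> real"
  assumes Fd: "\<And>z. z \<in> SS a b \<Longrightarrow> (F has_derivative F' z) (at z within SS a b)"
    and t: "t \<in> {a..b}"
  shows "d1 F (x1,x2,x3,x4,t) = F' (x1,x2,x3,x4,t) (1,0,0,0,0)"
    and "d2 F (x1,x2,x3,x4,t) = F' (x1,x2,x3,x4,t) (0,1,0,0,0)"
    and "d3 F (x1,x2,x3,x4,t) = F' (x1,x2,x3,x4,t) (0,0,1,0,0)"
    and "d4 F (x1,x2,x3,x4,t) = F' (x1,x2,x3,x4,t) (0,0,0,1,0)"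
proof -
  have "((\<lambda>s. F ((0,x2,x3,x4,t) + s *\<^sub>R (1,0,0,0,0))) has_real_derivative
     F' ((0,x2,x3,x4,t) + x1 *\<^sub>R (1,0,0,0,0)) (1,0,0,0,0)) (at x1)"
    by (rule line_deriv[OF Fd]) (use t in auto)
  thus "d1 F (x1,x2,x3,x4,t) = F' (x1,x2,x3,x4,t) (1,0,0,0,0)"
    unfolding d1_def by (simp add: DERIV_imp_deriv)
  have "((\<lambda>s. F ((x1,0,x3,x4,t) + s *\<^sub>R (0,1,0,0,0))) has_real_derivative
     F' ((x1,0,x3,x4,t) + x2 *\<^sub>R (0,1,0,0,0)) (0,1,0,0,0)) (at x2)"
    by (rule line_deriv[OF Fd]) (use t in auto)
  thus "d2 F (x1,x2,x3,x4,t) = F' (x1,x2,x3,x4,t) (0,1,0,0,0)"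
    unfolding d2_def by (simp add: DERIV_imp_deriv)
  have "((\<lambda>s. F ((x1,x2,0,x4,t) + s *\<^sub>R (0,0,1,0,0))) has_real_derivative
     F' ((x1,x2,0,x4,t) + x3 *\<^sub>R (0,0,1,0,0)) (0,0,1,0,0)) (at x3)"
    by (rule line_deriv[OF Fd]) (use t in auto)
  thus "d3 F (x1,x2,x3,x4,t) = F' (x1,x2,x3,x4,t) (0,0,1,0,0)"
    unfolding d3_def by (simp add: DERIV_imp_deriv)
  have "((\<lambda>s. F ((x1,x2,x3,0,t) + s *\<^sub>R (0,0,0,1,0))) has_real_derivative
     F' ((x1,x2,x3,0,t) + x4 *\<^sub>R (0,0,0,1,0)) (0,0,0,1,0)) (at x4)"
    by (rule line_deriv[OF Fd]) (use t in auto)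
  thus "d4 F (x1,x2,x3,x4,t) = F' (x1,x2,x3,x4,t) (0,0,0,1,0)"
    unfolding d4_def by (simp add: DERIV_imp_deriv)
qed

lemma conv_line:
  fixes G :: "'a::real_vector \<Rightarrow> real"
  assumes "convex_on UNIV G"
  shows "convex_on UNIV (\<lambda>s::real. G (p + s *\<^sub>R q))"
  unfolding convex_on_def
proof (intro conjI ballI allI impI)
  fix x y u v :: real assume uv: "0 \<le> u" "0 \<le> v" "u + v = 1"
  have "p + (u *\<^sub>R x + v *\<^sub>R y) *\<^sub>R q = u *\<^sub>R (p + x *\<^sub>R q) + v *\<^sub>R (p + y *\<^sub>R q)"
    using uv by (simp add: algebra_simps flip: scaleR_add_left)
  thus "G (p + (u *\<^sub>R x + v *\<^sub>R y) *\<^sub>R q) \<le> u * G (p + x *\<^sub>R q) + v * G (p + y *\<^sub>R q)"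
    using assms uv unfolding convex_on_def by simp
qed simp

lemma tangent_ineq:
  fixes F :: "arg5 \<Rightarrow> real"
  assumes Fd: "\<And>z. z \<in> SS a b \<Longrightarrow> (F has_derivative F' z) (at z within SS a b)"
    and t: "t \<in> {a..b}"
    and conv: "convex_on UNIV (\<lambda>(x1, x2, x3, x4). F (x1, x2, x3, x4, t))"
  shows "F (w1,w2,w3,w4,t) - F (z1,z2,z3,z4,t) \<ge>
     d1 F (z1,z2,z3,z4,t) * (w1 - z1) + d2 F (z1,z2,z3,z4,t) * (w2 - z2)
   + d3 F (z1,z2,z3,z4,t) * (w3 - z3) + d4 F (z1,z2,z3,z4,t) * (w4 - z4)"
proof -
  define x where "x = (z1,z2,z3,z4,t)"
  define v where "v = (w1-z1,w2-z2,w3-z3,w4-z4,0::real)"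
  define G where "G = (\<lambda>(x1, x2, x3, x4). F (x1, x2, x3, x4, t))"
  define \<phi> where "\<phi> s = F (x + s *\<^sub>R v)" for s
  have phiG: "\<phi> = (\<lambda>s. G ((z1,z2,z3,z4) + s *\<^sub>R (w1-z1,w2-z2,w3-z3,w4-z4)))"
    by (auto simp: \<phi>_def G_def x_def v_def)
  have cphi: "convex_on UNIV \<phi>" unfolding phiG by (rule conv_line) (use conv in \<open>simp add: G_def\<close>)
  have d: "(\<phi> has_real_derivative F' x v) (at 0)"
    unfolding \<phi>_def using line_deriv[OF Fd, of x v 0] t by (auto simp: x_def v_def)
  have "\<phi> 1 - \<phi> 0 \<ge> F' x v * (1 - 0)"
    by (rule convex_on_imp_above_tangent[OF cphi]) (use d in auto)
  moreover have "\<phi> 1 = F (w1,w2,w3,w4,t)" "\<phi> 0 = F (z1,z2,z3,z4,t)"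
    by (auto simp: \<phi>_def x_def v_def)
  moreover have "linear (F' x)" using Fd[of x] t by (auto simp: x_def intro: has_derivative_linear)
  hence "F' x v = (w1-z1) * F' x (1,0,0,0,0) + (w2-z2) * F' x (0,1,0,0,0)
       + (w3-z3) * F' x (0,0,1,0,0) + (w4-z4) * F' x (0,0,0,1,0)"
  proof -
    assume l: "linear (F' x)"
    have "v = (w1-z1) *\<^sub>R (1,0,0,0,0) + (w2-z2) *\<^sub>R (0,1,0,0,0)
       + (w3-z3) *\<^sub>R (0,0,1,0,0) + (w4-z4) *\<^sub>R (0,0,0,1,0)" by (simp add: v_def)
    hence "F' x v = F' x ((w1-z1) *\<^sub>R (1,0,0,0,0) + (w2-z2) *\<^sub>R (0,1,0,0,0)
       + (w3-z3) *\<^sub>R (0,0,1,0,0) + (w4-z4) *\<^sub>R (0,0,0,1,0))" by simp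
    also have "\<dots> = (w1-z1) *\<^sub>R F' x (1,0,0,0,0) + (w2-z2) *\<^sub>R F' x (0,1,0,0,0)
       + (w3-z3) *\<^sub>R F' x (0,0,1,0,0) + (w4-z4) *\<^sub>R F' x (0,0,0,1,0)"
      by (simp only: linear_add[OF l] linear_scale[OF l])
    finally show ?thesis by simp
  qed
  ultimately show ?thesis
    using partials[OF Fd t, of z1 z2 z3 z4] by (simp add: x_def algebra_simps)
qed



lemma sic:
  assumes "\<And>x. x \<in> A \<Longrightarrow> f x = g x"
  shows "(LINT x:A|M. f x) = (LINT x:A|M. (g x :: real))"
  unfolding set_lebesgue_integral_def
  by (rule Bochner_Integration.integral_cong) (use assms in \<open>auto split: split_indicator\<close>)

lemma cint: "continuous_on {a..b} f \<Longrightarrow> set_integrable lborel {a..b} (f :: real \<Rightarrow> real)"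
  by (rule borel_integrable_atLeastAtMost')

lemma C1_facts:
  assumes ab: "a < b" and y: "C1_interval a b y"
  obtains Y' where "continuous_on {a..b} Y'"
    "\<And>t. t \<in> {a..b} \<Longrightarrow> (y has_real_derivative Y' t) (at t within {a..b})"
    "\<And>t. t \<in> {a..b} \<Longrightarrow> dotd a b y t = Y' t"
    "continuous_on {a..b} (dotd a b y)" "continuous_on {a..b} y"
proof -
  obtain Y' where c: "continuous_on {a..b} Y'" and d: "\<And>t. t \<in> {a..b} \<Longrightarrow> (y has_real_derivative Y' t) (at t within {a..b})"
    using y unfolding C1_interval_def by blast
  have e: "dotd a b y t = Y' t" if "t \<in> {a..b}" for t
    unfolding dotd_def
    by (rule vector_derivative_within_closed_interval[OF ab that])
       (use d[OF that] in \<open>simp add: has_real_derivative_iff_has_vector_derivative\<close>)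
  have "continuous_on {a..b} (dotd a b y)" using c by (rule continuous_on_cong[THEN iffD1, rotated 2]) (auto simp: e)
  moreover have "continuous_on {a..b} y"
    unfolding continuous_on_eq_continuous_within using d DERIV_continuous by blast
  ultimately show ?thesis using that c d e by blast
qed

lemma ibp:
  fixes u h u' h' :: "real \<Rightarrow> real"
  assumes ab: "a < b"
    and cu': "continuous_on {a..b} u'" and du: "\<And>t. t \<in> {a..b} \<Longrightarrow> (u has_real_derivative u' t) (at t within {a..b})"
    and ch': "continuous_on {a..b} h'" and dh: "\<And>t. t \<in> {a..b} \<Longrightarrow> (h has_real_derivative h' t) (at t within {a..b})"
    and ua: "u a = 0" and ub: "u b = 0"
  shows "(LINT t:{a..b}|lborel. u' t * h t) = - (LINT t:{a..b}|lborel. u t * h' t)"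
proof -
  have cu: "continuous_on {a..b} u"
    unfolding continuous_on_eq_continuous_within using du DERIV_continuous by blast
  have ch: "continuous_on {a..b} h"
    unfolding continuous_on_eq_continuous_within using dh DERIV_continuous by blast
  have "(LBINT t=a..b. u' t * h t + u t * h' t) = u b * h b - u a * h a"
  proof (rule interval_integral_FTC_finite)
    show "continuous_on {min a b..max a b} (\<lambda>t. u' t * h t + u t * h' t)"
      using ab cu' ch cu ch' by (auto intro!: continuous_intros)
    fix x assume "min a b \<le> x" "x \<le> max a b"
    hence x: "x \<in> {a..b}" using ab by auto
    have "((\<lambda>t. u t * h t) has_real_derivative (u' x * h x + u x * h' x)) (at x within {a..b})"
      using DERIV_mult'[OF du[OF x] dh[OF x]] by (simp add: add.commute)
    thus "((\<lambda>t. u t * h t) has_vector_derivative (u' x * h x + u x * h' x)) (at x within {min a b..max a b})"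
      using ab by (simp add: has_real_derivative_iff_has_vector_derivative)
  qed
  hence "(LINT t:{a..b}|lborel. u' t * h t + u t * h' t) = 0"
    using ab ua ub by (simp add: interval_integral_Icc)
  moreover have "(LINT t:{a..b}|lborel. u' t * h t + u t * h' t)
     = (LINT t:{a..b}|lborel. u' t * h t) + (LINT t:{a..b}|lborel. u t * h' t)"
    by (rule set_integral_add(2); rule cint; intro continuous_intros cu' ch cu ch')
  ultimately show ?thesis by simp
qed

lemma adjoint:
  fixes f g :: "real \<Rightarrow> real" and k :: "real \<times> real \<Rightarrow> real"
  assumes kint: "set_integrable lborel (Delta a b) k"
    and f: "continuous_on {a..b} f" and g: "continuous_on {a..b} g"
  shows "(LINT t:{a..b}|lborel. g t * KP a b lam mu k f t) = (LINT t:{a..b}|lborel. f t * KPs a b lam mu k g t)"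
proof -
  define Af where "Af t = (LINT \<tau>:{a..t}|lborel. k (t,\<tau>) * f \<tau>)" for t
  define Ag where "Ag t = (LINT \<tau>:{a..t}|lborel. k (t,\<tau>) * g \<tau>)" for t
  define Bf where "Bf \<tau> = (LINT t:{\<tau>..b}|lborel. k (t,\<tau>) * f t)" for \<tau>
  define Bg where "Bg \<tau> = (LINT t:{\<tau>..b}|lborel. k (t,\<tau>) * g t)" for \<tau>
  note h1 = adj_half[OF kint f g, folded Af_def Bg_def]
  note h2 = adj_half[OF kint g f, folded Ag_def Bf_def]
  have KPf: "KP a b lam mu k f t = lam * Af t + mu * Bf t" for t
    by (simp add: KP_def Af_def Bf_def)
  have KPsg: "KPs a b lam mu k g t = mu * Ag t + lam * Bg t" for t
    by (simp add: KPs_def KP_def Ag_def Bg_def)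
  have "(LINT t:{a..b}|lborel. g t * KP a b lam mu k f t)
      = (LINT t:{a..b}|lborel. lam * (g t * Af t) + mu * (g t * Bf t))"
    by (rule sic) (simp add: KPf algebra_simps)
  also have "\<dots> = lam * (LINT t:{a..b}|lborel. g t * Af t) + mu * (LINT t:{a..b}|lborel. g t * Bf t)"
    using h1(1) h2(2) by (subst set_integral_add(2)) auto
  also have "\<dots> = lam * (LINT t:{a..b}|lborel. f t * Bg t) + mu * (LINT t:{a..b}|lborel. f t * Ag t)"
    using h1(3) h2(3) by simp
  also have "\<dots> = (LINT t:{a..b}|lborel. mu * (f t * Ag t) + lam * (f t * Bg t))"
    using h1(2) h2(1) by (subst set_integral_add(2)) auto
  also have "\<dots> = (LINT t:{a..b}|lborel. f t * KPs a b lam mu k g t)"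
    by (rule sic) (simp add: KPsg algebra_simps)
  finally show ?thesis .
qed



lemma star_facts:
  assumes ab: "a < b" and y: "y \<in> adm a b lam mu k ya yb"
  shows "continuous_on {a..b} (star a b lam mu k y)" "star a b lam mu k y ` {a..b} \<subseteq> SS a b"
proof -
  obtain Y' where "continuous_on {a..b} (dotd a b y)" "continuous_on {a..b} y"
    using C1_facts[OF ab, of y] y by (auto simp: adm_def)
  moreover have "continuous_on {a..b} (KP a b lam mu k y)" "continuous_on {a..b} (BP a b lam mu k y)"
    using y by (auto simp: adm_def)
  ultimately show "continuous_on {a..b} (star a b lam mu k y)"
    unfolding star_def by (intro continuous_intros) auto
  show "star a b lam mu k y ` {a..b} \<subseteq> SS a b" by (auto simp: star_def)
qed

lemma dF_eq:
  fixes F :: "arg5 \<Rightarrow> real"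
  assumes Fd: "\<And>z. z \<in> SS a b \<Longrightarrow> (F has_derivative F' z) (at z within SS a b)"
    and z: "z \<in> SS a b"
  shows "d1 F z = F' z (1,0,0,0,0)" "d2 F z = F' z (0,1,0,0,0)"
    "d3 F z = F' z (0,0,1,0,0)" "d4 F z = F' z (0,0,0,1,0)"
proof -
  obtain x1 x2 x3 x4 t where zz: "z = (x1,x2,x3,x4,t)" by (cases z) blast
  have t: "t \<in> {a..b}" using z zz by simp
  show "d1 F z = F' z (1,0,0,0,0)" unfolding zz by (rule partials(1)[OF Fd t])
  show "d2 F z = F' z (0,1,0,0,0)" unfolding zz by (rule partials(2)[OF Fd t])
  show "d3 F z = F' z (0,0,1,0,0)" unfolding zz by (rule partials(3)[OF Fd t])
  show "d4 F z = F' z (0,0,0,1,0)" unfolding zz by (rule partials(4)[OF Fd t])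
qed

lemma dF_cont:
  fixes F :: "arg5 \<Rightarrow> real"
  assumes Fd: "\<And>z. z \<in> SS a b \<Longrightarrow> (F has_derivative F' z) (at z within SS a b)"
    and Fc: "\<And>v. continuous_on (SS a b) (\<lambda>z. F' z v)"
  shows "continuous_on (SS a b) (d1 F)" "continuous_on (SS a b) (d2 F)"
    "continuous_on (SS a b) (d3 F)" "continuous_on (SS a b) (d4 F)"
proof -
  show "continuous_on (SS a b) (d1 F)"
    by (rule continuous_on_cong[THEN iffD2, OF refl _ Fc]) (rule dF_eq(1)[OF Fd], assumption)
  show "continuous_on (SS a b) (d2 F)"
    by (rule continuous_on_cong[THEN iffD2, OF refl _ Fc]) (rule dF_eq(2)[OF Fd], assumption)
  show "continuous_on (SS a b) (d3 F)"
    by (rule continuous_on_cong[THEN iffD2, OF refl _ Fc]) (rule dF_eq(3)[OF Fd], assumption)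
  show "continuous_on (SS a b) (d4 F)"
    by (rule continuous_on_cong[THEN iffD2, OF refl _ Fc]) (rule dF_eq(4)[OF Fd], assumption)
qed

lemma cadd: fixes f g :: "real \<Rightarrow> real" assumes "continuous_on {a..b} f" "continuous_on {a..b} g" shows
  "(LINT t:{a..b}|lborel. f t + g t) = (LINT t:{a..b}|lborel. f t) + (LINT t:{a..b}|lborel. (g t :: real))"
  using set_integral_add(2)[OF cint[OF assms(1)] cint[OF assms(2)]] .

lemma cdiff: fixes f g :: "real \<Rightarrow> real" assumes "continuous_on {a..b} f" "continuous_on {a..b} g" shows
  "(LINT t:{a..b}|lborel. f t - g t) = (LINT t:{a..b}|lborel. f t) - (LINT t:{a..b}|lborel. (g t :: real))"
  using set_integral_diff(2)[OF cint[OF assms(1)] cint[OF assms(2)]] .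

theorem mainTheorem4:
  fixes a b p q lam mu ya yb :: real
    and k :: "real \<times> real \<Rightarrow> real"
    and F :: "arg5 \<Rightarrow> real"
    and ybar :: "real \<Rightarrow> real"
  assumes ab: "a < b"
    and p: "1 < p" and q: "q = p / (p - 1)"
    and k: "in_Lq q (Delta a b) k"
    and F: "C1_on (UNIV \<times> UNIV \<times> UNIV \<times> UNIV \<times> {a..b}) F"
    and reg: "\<forall>y\<in>adm a b lam mu k ya yb.
         continuous_on {a..b} (KPs a b lam mu k (\<lambda>\<tau>. d2 F (star a b lam mu k y \<tau>))) \<and>
         C1_interval a b (\<lambda>t. d3 F (star a b lam mu k y t)) \<and>
         C1_interval a b (KPs a b lam mu k (\<lambda>\<tau>. d4 F (star a b lam mu k y \<tau>)))"
    and ybar: "ybar \<in> adm a b lam mu k ya yb"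
    and EL: "\<forall>t\<in>{a<..<b}.
         deriv (\<lambda>s. d3 F (star a b lam mu k ybar s)) t
         + APs a b lam mu k (\<lambda>\<tau>. d4 F (star a b lam mu k ybar \<tau>)) t
         = d1 F (star a b lam mu k ybar t)
         + KPs a b lam mu k (\<lambda>\<tau>. d2 F (star a b lam mu k ybar \<tau>)) t"
    and conv: "\<forall>t\<in>{a..b}. convex_on UNIV (\<lambda>(x1, x2, x3, x4). F (x1, x2, x3, x4, t))"
  shows "local_minimizer a b (Ifun a b lam mu k F) (adm a b lam mu k ya yb) ybar"
proof -
  have q1: "1 < q" using p unfolding q by (simp add: less_divide_eq)
  have kint: "set_integrable lborel (Delta a b) k" by (rule k_L1[OF q1 k])
  obtain F' where Fd: "\<And>z. z \<in> SS a b \<Longrightarrow> (F has_derivative F' z) (at z within SS a b)"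
    and Fc: "\<And>v. continuous_on (SS a b) (\<lambda>z. F' z v)"
    using F unfolding C1_on_def by blast
  have Fcont: "continuous_on (SS a b) F"
    unfolding continuous_on_eq_continuous_within using Fd has_derivative_continuous by blast
  note dc = dF_cont[OF Fd Fc]
  note sz = star_facts[OF ab ybar]
  define z where "z = star a b lam mu k ybar"
  define g1 where "g1 = (\<lambda>t. d1 F (z t))"
  define g2 where "g2 = (\<lambda>t. d2 F (z t))"
  define g3 where "g3 = (\<lambda>t. d3 F (z t))"
  define g4 where "g4 = (\<lambda>t. d4 F (z t))"
  define h2 where "h2 = KPs a b lam mu k g2"
  define h4 where "h4 = KPs a b lam mu k g4"
  have cg1: "continuous_on {a..b} g1" unfolding g1_def z_def
    by (rule continuous_on_compose2[OF dc(1) sz(1) sz(2)])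
  have cg2: "continuous_on {a..b} g2" unfolding g2_def z_def
    by (rule continuous_on_compose2[OF dc(2) sz(1) sz(2)])
  have cg3: "continuous_on {a..b} g3" unfolding g3_def z_def
    by (rule continuous_on_compose2[OF dc(3) sz(1) sz(2)])
  have cg4: "continuous_on {a..b} g4" unfolding g4_def z_def
    by (rule continuous_on_compose2[OF dc(4) sz(1) sz(2)])
  have regb: "continuous_on {a..b} h2" "C1_interval a b g3" "C1_interval a b h4"
  proof -
    have "continuous_on {a..b} (KPs a b lam mu k (\<lambda>\<tau>. d2 F (star a b lam mu k ybar \<tau>))) \<and>
         C1_interval a b (\<lambda>t. d3 F (star a b lam mu k ybar t)) \<and>
         C1_interval a b (KPs a b lam mu k (\<lambda>\<tau>. d4 F (star a b lam mu k ybar \<tau>)))"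
      using reg ybar by blast
    thus "continuous_on {a..b} h2" "C1_interval a b g3" "C1_interval a b h4"
      unfolding h2_def h4_def g2_def g3_def g4_def z_def by blast+
  qed
  obtain G3' where cG3: "continuous_on {a..b} G3'"
    and dG3: "\<And>t. t \<in> {a..b} \<Longrightarrow> (g3 has_real_derivative G3' t) (at t within {a..b})"
    and "\<And>t. t \<in> {a..b} \<Longrightarrow> dotd a b g3 t = G3' t" and "continuous_on {a..b} (dotd a b g3)"
    and "continuous_on {a..b} g3"
    by (rule C1_facts[OF ab regb(2)]) blast
  obtain H4' where cH4: "continuous_on {a..b} H4'"
    and dH4: "\<And>t. t \<in> {a..b} \<Longrightarrow> (h4 has_real_derivative H4' t) (at t within {a..b})"
    and eH4: "\<And>t. t \<in> {a..b} \<Longrightarrow> dotd a b h4 t = H4' t" and "continuous_on {a..b} (dotd a b h4)"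
    and ch4: "continuous_on {a..b} h4"
    by (rule C1_facts[OF ab regb(3)]) blast
  have EL': "G3' t + H4' t = g1 t + h2 t" if t: "t \<in> {a<..<b}" for t
  proof -
    have t': "t \<in> {a..b}" using t by auto
    have "deriv g3 t = G3' t"
      using dG3[OF t'] t by (intro DERIV_imp_deriv) (simp add: at_within_Icc_at)
    moreover have "APs a b lam mu k g4 t = H4' t"
      using eH4[OF t'] by (simp add: APs_def h4_def)
    ultimately show ?thesis using bspec[OF EL t]
      by (simp add: g1_def g3_def g4_def h2_def g2_def z_def)
  qed
  have ybC1: "C1_interval a b ybar" using ybar by (simp add: adm_def)
  obtain Z' where cZ': "continuous_on {a..b} Z'"
    and dZ: "\<And>t. t \<in> {a..b} \<Longrightarrow> (ybar has_real_derivative Z' t) (at t within {a..b})"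
    and eZ: "\<And>t. t \<in> {a..b} \<Longrightarrow> dotd a b ybar t = Z' t"
    and cdz: "continuous_on {a..b} (dotd a b ybar)" and cyb: "continuous_on {a..b} ybar"
    by (rule C1_facts[OF ab ybC1]) blast
  have cKPz: "continuous_on {a..b} (KP a b lam mu k ybar)" "continuous_on {a..b} (BP a b lam mu k ybar)"
    using ybar by (auto simp: adm_def)
  have main: "Ifun a b lam mu k F ybar \<le> Ifun a b lam mu k F y" if y: "y \<in> adm a b lam mu k ya yb" for y
  proof -
    note sy = star_facts[OF ab y]
    define w where "w = star a b lam mu k y"
    have yC1: "C1_interval a b y" using y by (simp add: adm_def)
    obtain Y' where cY': "continuous_on {a..b} Y'"
      and dY: "\<And>t. t \<in> {a..b} \<Longrightarrow> (y has_real_derivative Y' t) (at t within {a..b})"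
      and eY: "\<And>t. t \<in> {a..b} \<Longrightarrow> dotd a b y t = Y' t"
      and cdy: "continuous_on {a..b} (dotd a b y)" and cy: "continuous_on {a..b} y"
      by (rule C1_facts[OF ab yC1]) blast
    have cKPy: "continuous_on {a..b} (KP a b lam mu k y)" "continuous_on {a..b} (BP a b lam mu k y)"
      using y by (auto simp: adm_def)
    have ends: "y a = ybar a" "y b = ybar b" using y ybar by (auto simp: adm_def)
    have cFw: "continuous_on {a..b} (\<lambda>t. F (w t))" unfolding w_def
      by (rule continuous_on_compose2[OF Fcont sy(1) sy(2)])
    have cFz: "continuous_on {a..b} (\<lambda>t. F (z t))" unfolding z_def
      by (rule continuous_on_compose2[OF Fcont sz(1) sz(2)])
    define T where "T t = g1 t * (y t - ybar t) + g2 t * (KP a b lam mu k y t - KP a b lam mu k ybar t)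
       + g3 t * (dotd a b y t - dotd a b ybar t) + g4 t * (BP a b lam mu k y t - BP a b lam mu k ybar t)" for t
    note cs = cg1 cg2 cg3 cg4 cy cyb cdy cdz cKPy cKPz cY' cZ' cG3 cH4 regb(1) ch4 cFw cFz
    have cT: "continuous_on {a..b} T" unfolding T_def[abs_def] by (intro continuous_intros cs)
    have "Ifun a b lam mu k F y - Ifun a b lam mu k F ybar = (LINT t:{a..b}|lborel. F (w t) - F (z t))"
      unfolding Ifun_def w_def z_def
      by (rule set_integral_diff(2)[symmetric]; rule cint; fact cFw[unfolded w_def] cFz[unfolded z_def])
    also have "\<dots> \<ge> (LINT t:{a..b}|lborel. T t)"
    proof (rule set_integral_mono[OF cint[OF cT] cint])
      show "continuous_on {a..b} (\<lambda>t. F (w t) - F (z t))" by (intro continuous_intros cs)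
      fix t assume t: "t \<in> {a..b}"
      have cv: "convex_on UNIV (\<lambda>(x1, x2, x3, x4). F (x1, x2, x3, x4, t))" using conv t by blast
      show "T t \<le> F (w t) - F (z t)"
        using tangent_ineq[OF Fd t cv, of "ybar t" "KP a b lam mu k ybar t" "dotd a b ybar t" "BP a b lam mu k ybar t"
          "y t" "KP a b lam mu k y t" "dotd a b y t" "BP a b lam mu k y t"]
        unfolding T_def w_def z_def g1_def g2_def g3_def g4_def star_def by simp
    qed
    finally have ge: "Ifun a b lam mu k F y - Ifun a b lam mu k F ybar \<ge> (LINT t:{a..b}|lborel. T t)" .
    have dEta: "((\<lambda>t. y t - ybar t) has_real_derivative (Y' t - Z' t)) (at t within {a..b})"
      if "t \<in> {a..b}" for t using DERIV_diff[OF dY[OF that] dZ[OF that]] .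
    have ce: "continuous_on {a..b} (\<lambda>t. Y' t - Z' t)" by (intro continuous_intros cs)
    have L2: "(LINT t:{a..b}|lborel. g2 t * (KP a b lam mu k y t - KP a b lam mu k ybar t))
        = (LINT t:{a..b}|lborel. (y t - ybar t) * h2 t)"
    proof -
      have "(LINT t:{a..b}|lborel. g2 t * (KP a b lam mu k y t - KP a b lam mu k ybar t))
          = (LINT t:{a..b}|lborel. g2 t * KP a b lam mu k y t - g2 t * KP a b lam mu k ybar t)"
        by (rule sic) (simp add: algebra_simps)
      also have "\<dots> = (LINT t:{a..b}|lborel. g2 t * KP a b lam mu k y t) - (LINT t:{a..b}|lborel. g2 t * KP a b lam mu k ybar t)"
        by (rule cdiff) (intro continuous_intros cs)+
      also have "\<dots> = (LINT t:{a..b}|lborel. y t * h2 t) - (LINT t:{a..b}|lborel. ybar t * h2 t)"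
        unfolding h2_def by (simp only: adjoint[OF kint cy cg2] adjoint[OF kint cyb cg2])
      also have "\<dots> = (LINT t:{a..b}|lborel. y t * h2 t - ybar t * h2 t)"
        by (rule cdiff[symmetric]) (intro continuous_intros cs)+
      also have "\<dots> = (LINT t:{a..b}|lborel. (y t - ybar t) * h2 t)"
        by (rule sic) (simp add: algebra_simps)
      finally show ?thesis .
    qed
    have L4: "(LINT t:{a..b}|lborel. g4 t * (BP a b lam mu k y t - BP a b lam mu k ybar t))
        = - (LINT t:{a..b}|lborel. (y t - ybar t) * H4' t)"
    proof -
      have "(LINT t:{a..b}|lborel. g4 t * (BP a b lam mu k y t - BP a b lam mu k ybar t))
          = (LINT t:{a..b}|lborel. g4 t * KP a b lam mu k (dotd a b y) t - g4 t * KP a b lam mu k (dotd a b ybar) t)"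
        by (rule sic) (simp add: algebra_simps BP_def)
      also have "\<dots> = (LINT t:{a..b}|lborel. g4 t * KP a b lam mu k (dotd a b y) t) - (LINT t:{a..b}|lborel. g4 t * KP a b lam mu k (dotd a b ybar) t)"
      proof -
        have c1: "continuous_on {a..b} (KP a b lam mu k (dotd a b y))"
          using cKPy(2) unfolding BP_def[abs_def] .
        have c2: "continuous_on {a..b} (KP a b lam mu k (dotd a b ybar))"
          using cKPz(2) unfolding BP_def[abs_def] .
        show ?thesis by (rule cdiff) (intro continuous_intros cs c1 c2)+
      qed
      also have "\<dots> = (LINT t:{a..b}|lborel. dotd a b y t * h4 t) - (LINT t:{a..b}|lborel. dotd a b ybar t * h4 t)"
        unfolding h4_def by (simp only: adjoint[OF kint cdy cg4] adjoint[OF kint cdz cg4])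
      also have "\<dots> = (LINT t:{a..b}|lborel. dotd a b y t * h4 t - dotd a b ybar t * h4 t)"
        by (rule cdiff[symmetric]) (intro continuous_intros cs)+
      also have "\<dots> = (LINT t:{a..b}|lborel. (Y' t - Z' t) * h4 t)"
        by (rule sic) (simp add: algebra_simps eY eZ)
      also have "\<dots> = - (LINT t:{a..b}|lborel. (y t - ybar t) * H4' t)"
        by (rule ibp[OF ab ce dEta cH4 dH4]) (simp_all add: ends)
      finally show ?thesis .
    qed
    have L3: "(LINT t:{a..b}|lborel. g3 t * (dotd a b y t - dotd a b ybar t))
        = - (LINT t:{a..b}|lborel. (y t - ybar t) * G3' t)"
    proof -
      have "(LINT t:{a..b}|lborel. g3 t * (dotd a b y t - dotd a b ybar t))
          = (LINT t:{a..b}|lborel. (Y' t - Z' t) * g3 t)"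
        by (rule sic) (simp add: algebra_simps eY eZ)
      also have "\<dots> = - (LINT t:{a..b}|lborel. (y t - ybar t) * G3' t)"
        by (rule ibp[OF ab ce dEta cG3 dG3]) (simp_all add: ends)
      finally show ?thesis .
    qed
    have "(LINT t:{a..b}|lborel. T t) =
        (LINT t:{a..b}|lborel. g1 t * (y t - ybar t)) +
        (LINT t:{a..b}|lborel. g2 t * (KP a b lam mu k y t - KP a b lam mu k ybar t)) +
        (LINT t:{a..b}|lborel. g3 t * (dotd a b y t - dotd a b ybar t)) +
        (LINT t:{a..b}|lborel. g4 t * (BP a b lam mu k y t - BP a b lam mu k ybar t))"
      unfolding T_def
      by (subst cadd, (intro continuous_intros cs)+)+ (rule refl)
    also have "\<dots> = (LINT t:{a..b}|lborel. (y t - ybar t) * g1 t) + (LINT t:{a..b}|lborel. (y t - ybar t) * h2 t)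
        - (LINT t:{a..b}|lborel. (y t - ybar t) * G3' t) - (LINT t:{a..b}|lborel. (y t - ybar t) * H4' t)"
      unfolding L2 L3 L4 by (simp add: mult.commute)
    also have "\<dots> = (LINT t:{a..b}|lborel. (y t - ybar t) * g1 t + (y t - ybar t) * h2 t
        - (y t - ybar t) * G3' t - (y t - ybar t) * H4' t)"
      by (subst cdiff cadd, (intro continuous_intros cs)+)+ (rule refl)
    also have "\<dots> = (LINT t:{a..b}|lborel. 0)"
    proof (rule sic)
      fix t assume t: "t \<in> {a..b}"
      show "(y t - ybar t) * g1 t + (y t - ybar t) * h2 t - (y t - ybar t) * G3' t - (y t - ybar t) * H4' t = 0"
      proof (cases "t = a \<or> t = b")
        case True thus ?thesis using ends by auto
      next
        case False
        hence "t \<in> {a<..<b}" using t by auto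
        have "(y t - ybar t) * g1 t + (y t - ybar t) * h2 t - (y t - ybar t) * G3' t - (y t - ybar t) * H4' t
          = (y t - ybar t) * (g1 t + h2 t - (G3' t + H4' t))" by (simp add: algebra_simps)
        with EL'[OF \<open>t \<in> {a<..<b}\<close>] show ?thesis by simp
      qed
    qed
    finally have "(LINT t:{a..b}|lborel. T t) = 0" by simp
    thus ?thesis using ge by simp
  qed
  show ?thesis unfolding local_minimizer_def
  proof (intro conjI)
    show "ybar \<in> adm a b lam mu k ya yb" by (rule ybar)
    show "\<exists>\<epsilon>>0. \<forall>y\<in>adm a b lam mu k ya yb. (\<forall>t\<in>{a..b}. \<bar>y t - ybar t\<bar> < \<epsilon>) \<longrightarrow>
        Ifun a b lam mu k F ybar \<le> Ifun a b lam mu k F y"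
      using main by (intro exI[of _ 1]) simp
  qed
qed


end
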